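(* Let $K$ be a finite group and let $A\subseteq K$ be such that $L:=L(\{1\}\cup A)$ is a reflection system for $K$. If $x\in L$, then $\{1,x\}\cup xA$ generates the reflection system $xL$ for $K$ and $\{1,x\}\cup Ax$ generates the reflection system $Lx$ for $K$, i.e. $L(\{1,x\}\cup xA)=xL$ and $L(\{1,x\}\cup Ax)=Lx$, and both are reflection systems for $K$ equivalent to (but possibly not equal to) $L$.
   Context: For a group $K$ and $a,b\in K$ put $a\circ b:=ab^{-1}a$. For $X\subseteq K$, $L(X)$ denotes the closure of $X$ under $\circ$, i.e. the smallest subset of $K$ containing $X$ and closed under $\circ$; one says $X$ generates $L(X)$. A reflection system for a finite group $K$ is a subset $L\subseteq K$ such that (1) $L$ generates $K$ as a group, (2) $L$ is closed under $\circ$, and (3) $1\in L$. Two reflection systems $L,L'$ for $K$ are called equivalent if $L'=\phi(xL)$ or $L'=\phi(Lx)$ for some $x\in L$ and some automorphism $\phi$ of $K$. *)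

theory Defs
  imports "HOL-Algebra.Algebra"
begin

definition refl_op :: "('a, 'b) monoid_scheme \<Rightarrow> 'a \<Rightarrow> 'a \<Rightarrow> 'a" where
  "refl_op G a b = a \<otimes>\<^bsub>G\<^esub> inv\<^bsub>G\<^esub> b \<otimes>\<^bsub>G\<^esub> a"

definition refl_closure :: "('a, 'b) monoid_scheme \<Rightarrow> 'a set \<Rightarrow> 'a set" where
  "refl_closure G Y = Inter {S. Y \<subseteq> S \<and> (\<forall>a\<in>S. \<forall>b\<in>S. refl_op G a b \<in> S)}"

definition reflection_system :: "('a, 'b) monoid_scheme \<Rightarrow> 'a set \<Rightarrow> bool" where
  "reflection_system G L \<longleftrightarrow>
     L \<subseteq> carrier G \<and>
     generate G L = carrier G \<and>
     (\<forall>a\<in>L. \<forall>b\<in>L. refl_op G a b \<in> L) \<and>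
     \<one>\<^bsub>G\<^esub> \<in> L"

definition equiv_reflection_systems :: "('a, 'b) monoid_scheme \<Rightarrow> 'a set \<Rightarrow> 'a set \<Rightarrow> bool" where
  "equiv_reflection_systems G L L' \<longleftrightarrow>
     (\<exists>x\<in>L. \<exists>\<phi>. \<phi> \<in> iso G G \<and>
        (L' = \<phi> ` (x <#\<^bsub>G\<^esub> L) \<or> L' = \<phi> ` (L #>\<^bsub>G\<^esub> x)))"

end

theory Submission
  imports Defs
begin

lemma rc_min: "Y \<subseteq> S \<Longrightarrow> (\<forall>a\<in>S. \<forall>b\<in>S. refl_op G a b \<in> S) \<Longrightarrow> refl_closure G Y \<subseteq> S"
  unfolding refl_closure_def by blast

lemma rc_incl: "Y \<subseteq> refl_closure G Y"
  unfolding refl_closure_def by blast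

lemma rc_closed: "\<forall>a\<in>refl_closure G Y. \<forall>b\<in>refl_closure G Y. refl_op G a b \<in> refl_closure G Y"
proof (intro ballI)
  fix a b assume a: "a \<in> refl_closure G Y" and b: "b \<in> refl_closure G Y"
  show "refl_op G a b \<in> refl_closure G Y"
    unfolding refl_closure_def
  proof (rule InterI)
    fix S assume S: "S \<in> {S. Y \<subseteq> S \<and> (\<forall>a\<in>S. \<forall>b\<in>S. refl_op G a b \<in> S)}"
    have "a \<in> S" using a S unfolding refl_closure_def by (rule InterD)
    moreover have "b \<in> S" using b S unfolding refl_closure_def by (rule InterD)
    ultimately show "refl_op G a b \<in> S" using S by blast
  qed
qed

lemma rc_mono:
  assumes "Y \<subseteq> Z" shows "refl_closure G Y \<subseteq> refl_closure G Z"
proof (rule rc_min)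
  show "Y \<subseteq> refl_closure G Z" using assms rc_incl[of Z G] by (rule order_trans)
  show "\<forall>a\<in>refl_closure G Z. \<forall>b\<in>refl_closure G Z. refl_op G a b \<in> refl_closure G Z"
    by (rule rc_closed)
qed

lemma img_closed:
  assumes hom: "\<forall>a\<in>carrier G. \<forall>b\<in>carrier G. f (refl_op G a b) = refl_op G (f a) (f b)"
    and S: "S \<subseteq> carrier G" "\<forall>a\<in>S. \<forall>b\<in>S. refl_op G a b \<in> S"
  shows "\<forall>a\<in>f ` S. \<forall>b\<in>f ` S. refl_op G a b \<in> f ` S"
proof (intro ballI)
  fix a b assume "a \<in> f ` S" "b \<in> f ` S"
  then obtain u v where "u \<in> S" "v \<in> S" "a = f u" "b = f v" by blast
  then show "refl_op G a b \<in> f ` S" using hom S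
  proof -
    have "u \<in> carrier G" "v \<in> carrier G" using S \<open>u \<in> S\<close> \<open>v \<in> S\<close> by auto
    then have "refl_op G a b = f (refl_op G u v)" using hom \<open>a = f u\<close> \<open>b = f v\<close> by simp
    moreover have "refl_op G u v \<in> S" using S(2) \<open>u \<in> S\<close> \<open>v \<in> S\<close> by simp
    ultimately show ?thesis by simp
  qed
qed

lemma (in group) rc_carrier:
  assumes "Y \<subseteq> carrier G" shows "refl_closure G Y \<subseteq> carrier G"
  by (rule rc_min[OF assms]) (auto simp: refl_op_def)

lemma (in group) img_sub:
  assumes hom: "\<forall>a\<in>carrier G. \<forall>b\<in>carrier G. f (refl_op G a b) = refl_op G (f a) (f b)"
    and Y: "Y \<subseteq> carrier G"
  shows "f ` refl_closure G Y \<subseteq> refl_closure G (f ` Y)"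
proof -
  let ?T = "{z\<in>carrier G. f z \<in> refl_closure G (f ` Y)}"
  have "refl_closure G Y \<subseteq> ?T"
  proof (rule rc_min)
    show "Y \<subseteq> ?T"
    proof
      fix y assume y: "y \<in> Y"
      have "f y \<in> refl_closure G (f ` Y)" using rc_incl[of "f ` Y" G] y by blast
      then show "y \<in> ?T" using Y y by blast
    qed
    show "\<forall>a\<in>?T. \<forall>b\<in>?T. refl_op G a b \<in> ?T"
    proof (intro ballI)
      fix a b assume a: "a \<in> ?T" and b: "b \<in> ?T"
      have ac: "a \<in> carrier G" and bc: "b \<in> carrier G" using a b by auto
      have "refl_op G (f a) (f b) \<in> refl_closure G (f ` Y)"
        using a b rc_closed[of G "f ` Y"] by simp
      moreover have "f (refl_op G a b) = refl_op G (f a) (f b)" using hom ac bc by simp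
      moreover have "refl_op G a b \<in> carrier G" using ac bc by (simp add: refl_op_def)
      ultimately show "refl_op G a b \<in> ?T" by simp
    qed
  qed
  then show ?thesis by auto
qed

lemma (in group) my_canc1:
  "x \<in> carrier G \<Longrightarrow> a \<in> carrier G \<Longrightarrow> inv x \<otimes> (x \<otimes> a) = a"
  by (simp add: m_assoc[symmetric] l_inv)

lemma (in group) my_canc2:
  "x \<in> carrier G \<Longrightarrow> a \<in> carrier G \<Longrightarrow> x \<otimes> (inv x \<otimes> a) = a"
  by (simp add: m_assoc[symmetric] r_inv)

lemma (in group) left_hom:
  assumes "x \<in> carrier G"
  shows "\<forall>a\<in>carrier G. \<forall>b\<in>carrier G. x \<otimes> (refl_op G a b) = refl_op G (x \<otimes> a) (x \<otimes> b)"
proof (intro ballI)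
  fix a b assume ab: "a \<in> carrier G" "b \<in> carrier G"
  have "(x \<otimes> a) \<otimes> inv (x \<otimes> b) \<otimes> (x \<otimes> a) = x \<otimes> a \<otimes> inv b \<otimes> (inv x \<otimes> x) \<otimes> a"
    using ab assms by (simp add: inv_mult_group m_assoc my_canc1 my_canc2)
  also have "\<dots> = x \<otimes> (a \<otimes> inv b \<otimes> a)"
    using ab assms by (simp add: m_assoc my_canc1)
  finally show "x \<otimes> refl_op G a b = refl_op G (x \<otimes> a) (x \<otimes> b)"
    by (simp add: refl_op_def)
qed

lemma (in group) right_hom:
  assumes "x \<in> carrier G"
  shows "\<forall>a\<in>carrier G. \<forall>b\<in>carrier G. (refl_op G a b) \<otimes> x = refl_op G (a \<otimes> x) (b \<otimes> x)"
proof (intro ballI)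
  fix a b assume ab: "a \<in> carrier G" "b \<in> carrier G"
  have "(a \<otimes> x) \<otimes> inv (b \<otimes> x) \<otimes> (a \<otimes> x) = a \<otimes> (x \<otimes> inv x) \<otimes> inv b \<otimes> a \<otimes> x"
    using ab assms by (simp add: inv_mult_group m_assoc my_canc1 my_canc2)
  also have "\<dots> = (a \<otimes> inv b \<otimes> a) \<otimes> x"
    using ab assms by (simp add: m_assoc my_canc2)
  finally show "refl_op G a b \<otimes> x = refl_op G (a \<otimes> x) (b \<otimes> x)"
    by (simp add: refl_op_def)
qed

lemma (in group) left_part:
  assumes A: "A \<subseteq> carrier G"
    and RS: "reflection_system G (refl_closure G ({\<one>} \<union> A))"
    and x: "x \<in> refl_closure G ({\<one>} \<union> A)"
  shows "refl_closure G ({\<one>, x} \<union> (x <# A)) = x <# refl_closure G ({\<one>} \<union> A)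
     \<and> reflection_system G (x <# refl_closure G ({\<one>} \<union> A))
     \<and> equiv_reflection_systems G (refl_closure G ({\<one>} \<union> A)) (x <# refl_closure G ({\<one>} \<union> A))"
proof -
  define L where "L = refl_closure G ({\<one>} \<union> A)"
  define f where "f = (\<lambda>y. x \<otimes> y)"
  have Lc: "L \<subseteq> carrier G" and gen: "generate G L = carrier G"
    and Lcl: "\<forall>a\<in>L. \<forall>b\<in>L. refl_op G a b \<in> L" and one: "\<one> \<in> L"
    using RS unfolding reflection_system_def L_def by auto
  have xL: "x \<in> L" using x L_def by simp
  have xc: "x \<in> carrier G" using xL Lc by blast
  have AL: "{\<one>} \<union> A \<subseteq> L" unfolding L_def by (rule rc_incl)
  have ixL: "inv x \<in> L"
  proof -
    have "refl_op G \<one> x = inv x" using xc by (simp add: refl_op_def)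
    then show ?thesis using Lcl one xL by metis
  qed
  have hom: "\<forall>a\<in>carrier G. \<forall>b\<in>carrier G. f (refl_op G a b) = refl_op G (f a) (f b)"
    unfolding f_def by (rule left_hom[OF xc])
  have img: "\<And>S. x <# S = f ` S" unfolding l_coset_def f_def by auto
  have fLcl: "\<forall>a\<in>f ` L. \<forall>b\<in>f ` L. refl_op G a b \<in> f ` L"
    by (rule img_closed[OF hom Lc Lcl])
  have one': "\<one> \<in> f ` L"
  proof -
    have "f (inv x) = \<one>" unfolding f_def using xc by simp
    then show ?thesis using ixL by (metis image_eqI)
  qed
  have x': "x \<in> f ` L"
  proof -
    have "f \<one> = x" unfolding f_def using xc by simp
    then show ?thesis using one by (metis image_eqI)
  qed
  have fLc: "f ` L \<subseteq> carrier G" using Lc xc unfolding f_def by auto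
  have eq: "refl_closure G ({\<one>, x} \<union> f ` A) = f ` L"
  proof
    show "refl_closure G ({\<one>, x} \<union> f ` A) \<subseteq> f ` L"
      by (rule rc_min) (use one' x' AL fLcl in auto)
    have "f ` L \<subseteq> refl_closure G (f ` ({\<one>} \<union> A))"
      unfolding L_def by (rule img_sub[OF hom]) (use A in auto)
    also have "\<dots> \<subseteq> refl_closure G ({\<one>, x} \<union> f ` A)"
      by (rule rc_mono) (use xc in \<open>auto simp: f_def\<close>)
    finally show "f ` L \<subseteq> refl_closure G ({\<one>, x} \<union> f ` A)" .
  qed
  have rs: "reflection_system G (f ` L)"
  proof -
    let ?H = "generate G (f ` L)"
    have sg: "subgroup ?H G" by (rule generate_is_subgroup[OF fLc])
    have "x \<in> ?H" by (rule generate.incl[OF x'])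
    then have ixH: "inv x \<in> ?H" using sg by (simp add: subgroup.m_inv_closed)
    have "L \<subseteq> ?H"
    proof
      fix l assume l: "l \<in> L"
      have "f l \<in> ?H" by (rule generate.incl) (use l in simp)
      then have "inv x \<otimes> f l \<in> ?H" using ixH sg by (simp add: subgroup.m_closed)
      moreover have "inv x \<otimes> f l = l" unfolding f_def using l Lc xc my_canc1[OF xc, of l] by (simp add: subset_iff)
      ultimately show "l \<in> ?H" by simp
    qed
    then have "generate G L \<subseteq> ?H" by (rule generate_subgroup_incl[OF _ sg])
    then have "?H = carrier G" using gen generate_incl[OF fLc] by (rule_tac equalityI) simp_all
    then show ?thesis unfolding reflection_system_def using fLc fLcl one' by simp
  qed
  have eqv: "equiv_reflection_systems G L (f ` L)"
    unfolding equiv_reflection_systems_def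
    by (rule bexI[OF _ xL], rule exI[of _ "\<lambda>y. y"]) (simp add: iso_set_refl img)
  show ?thesis using eq rs eqv unfolding img L_def by simp
qed

lemma (in group) my_canc3:
  "x \<in> carrier G \<Longrightarrow> a \<in> carrier G \<Longrightarrow> a \<otimes> x \<otimes> inv x = a"
  by (simp add: m_assoc r_inv)

lemma (in group) right_part:
  assumes A: "A \<subseteq> carrier G"
    and RS: "reflection_system G (refl_closure G ({\<one>} \<union> A))"
    and x: "x \<in> refl_closure G ({\<one>} \<union> A)"
  shows "refl_closure G ({\<one>, x} \<union> (A #> x)) = refl_closure G ({\<one>} \<union> A) #> x
     \<and> reflection_system G (refl_closure G ({\<one>} \<union> A) #> x)
     \<and> equiv_reflection_systems G (refl_closure G ({\<one>} \<union> A)) (refl_closure G ({\<one>} \<union> A) #> x)"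
proof -
  define L where "L = refl_closure G ({\<one>} \<union> A)"
  define f where "f = (\<lambda>y. y \<otimes> x)"
  have Lc: "L \<subseteq> carrier G" and gen: "generate G L = carrier G"
    and Lcl: "\<forall>a\<in>L. \<forall>b\<in>L. refl_op G a b \<in> L" and one: "\<one> \<in> L"
    using RS unfolding reflection_system_def L_def by auto
  have xL: "x \<in> L" using x L_def by simp
  have xc: "x \<in> carrier G" using xL Lc by blast
  have AL: "{\<one>} \<union> A \<subseteq> L" unfolding L_def by (rule rc_incl)
  have ixL: "inv x \<in> L"
  proof -
    have "refl_op G \<one> x = inv x" using xc by (simp add: refl_op_def)
    then show ?thesis using Lcl one xL by metis
  qed
  have hom: "\<forall>a\<in>carrier G. \<forall>b\<in>carrier G. f (refl_op G a b) = refl_op G (f a) (f b)"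
    unfolding f_def by (rule right_hom[OF xc])
  have img: "\<And>S. S #> x = f ` S" unfolding r_coset_def f_def by auto
  have fLcl: "\<forall>a\<in>f ` L. \<forall>b\<in>f ` L. refl_op G a b \<in> f ` L"
    by (rule img_closed[OF hom Lc Lcl])
  have one': "\<one> \<in> f ` L"
  proof -
    have "f (inv x) = \<one>" unfolding f_def using xc by simp
    then show ?thesis using ixL by (metis image_eqI)
  qed
  have x': "x \<in> f ` L"
  proof -
    have "f \<one> = x" unfolding f_def using xc by simp
    then show ?thesis using one by (metis image_eqI)
  qed
  have fLc: "f ` L \<subseteq> carrier G" using Lc xc unfolding f_def by auto
  have eq: "refl_closure G ({\<one>, x} \<union> f ` A) = f ` L"
  proof
    show "refl_closure G ({\<one>, x} \<union> f ` A) \<subseteq> f ` L"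
      by (rule rc_min) (use one' x' AL fLcl in auto)
    have "f ` L \<subseteq> refl_closure G (f ` ({\<one>} \<union> A))"
      unfolding L_def by (rule img_sub[OF hom]) (use A in auto)
    also have "\<dots> \<subseteq> refl_closure G ({\<one>, x} \<union> f ` A)"
      by (rule rc_mono) (use xc in \<open>auto simp: f_def\<close>)
    finally show "f ` L \<subseteq> refl_closure G ({\<one>, x} \<union> f ` A)" .
  qed
  have rs: "reflection_system G (f ` L)"
  proof -
    let ?H = "generate G (f ` L)"
    have sg: "subgroup ?H G" by (rule generate_is_subgroup[OF fLc])
    have "x \<in> ?H" by (rule generate.incl[OF x'])
    then have ixH: "inv x \<in> ?H" using sg by (simp add: subgroup.m_inv_closed)
    have "L \<subseteq> ?H"
    proof
      fix l assume l: "l \<in> L"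
      have "f l \<in> ?H" by (rule generate.incl) (use l in simp)
      then have "f l \<otimes> inv x \<in> ?H" using ixH sg by (simp add: subgroup.m_closed)
      moreover have "f l \<otimes> inv x = l" unfolding f_def using l Lc xc my_canc3[OF xc, of l] by (simp add: subset_iff)
      ultimately show "l \<in> ?H" by simp
    qed
    then have "generate G L \<subseteq> ?H" by (rule generate_subgroup_incl[OF _ sg])
    then have "?H = carrier G" using gen generate_incl[OF fLc] by (rule_tac equalityI) simp_all
    then show ?thesis unfolding reflection_system_def using fLc fLcl one' by simp
  qed
  have eqv: "equiv_reflection_systems G L (f ` L)"
    unfolding equiv_reflection_systems_def
    by (rule bexI[OF _ xL], rule exI[of _ "\<lambda>y. y"]) (simp add: iso_set_refl img)
  show ?thesis using eq rs eqv unfolding img L_def by simp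
qed

theorem lemma2p3:
  fixes G :: "('a, 'b) monoid_scheme" and A :: "'a set" and x :: 'a
  assumes "group G"
    and "finite (carrier G)"
    and "A \<subseteq> carrier G"
    and "reflection_system G (refl_closure G ({\<one>\<^bsub>G\<^esub>} \<union> A))"
    and "x \<in> refl_closure G ({\<one>\<^bsub>G\<^esub>} \<union> A)"
  shows "refl_closure G ({\<one>\<^bsub>G\<^esub>, x} \<union> (x <#\<^bsub>G\<^esub> A))
           = x <#\<^bsub>G\<^esub> refl_closure G ({\<one>\<^bsub>G\<^esub>} \<union> A)
       \<and> refl_closure G ({\<one>\<^bsub>G\<^esub>, x} \<union> (A #>\<^bsub>G\<^esub> x))
           = refl_closure G ({\<one>\<^bsub>G\<^esub>} \<union> A) #>\<^bsub>G\<^esub> x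
       \<and> reflection_system G (x <#\<^bsub>G\<^esub> refl_closure G ({\<one>\<^bsub>G\<^esub>} \<union> A))
       \<and> reflection_system G (refl_closure G ({\<one>\<^bsub>G\<^esub>} \<union> A) #>\<^bsub>G\<^esub> x)
       \<and> equiv_reflection_systems G (refl_closure G ({\<one>\<^bsub>G\<^esub>} \<union> A))
           (x <#\<^bsub>G\<^esub> refl_closure G ({\<one>\<^bsub>G\<^esub>} \<union> A))
       \<and> equiv_reflection_systems G (refl_closure G ({\<one>\<^bsub>G\<^esub>} \<union> A))
           (refl_closure G ({\<one>\<^bsub>G\<^esub>} \<union> A) #>\<^bsub>G\<^esub> x)"
proof -
  interpret group G by (rule assms(1))
  note l = left_part[OF assms(3,4,5)]
  note r = right_part[OF assms(3,4,5)]
  show ?thesis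
    apply (intro conjI)
         apply (rule l[THEN conjunct1])
        apply (rule r[THEN conjunct1])
       apply (rule l[THEN conjunct2, THEN conjunct1])
      apply (rule r[THEN conjunct2, THEN conjunct1])
     apply (rule l[THEN conjunct2, THEN conjunct2])
    apply (rule r[THEN conjunct2, THEN conjunct2])
    done
qed

end
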